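(* Let $G$ be a triangle-free graph and $n\ge 1$. Then every induced subgraph of $KB(G)$ isomorphic to $K_{1,n}$ is contained in a (not necessarily induced) subgraph of $KB(G)$ isomorphic to $(D_n)^2$ or to $(D_n^-)^2$.
   Context: All graphs are finite and simple. A biclique of a graph $G$ is a set $P\subseteq V(G)$ such that the induced subgraph $G[P]$ is a complete bipartite graph with both parts nonempty, and $P$ is inclusion-maximal with this property. The biclique graph $KB(G)$ has the set of bicliques of $G$ as vertex set, two distinct bicliques being adjacent iff they intersect. For a graph $H$, the square $H^2$ has vertex set $V(H)$, two distinct vertices being adjacent iff their distance in $H$ is at most $2$. $D_n$ is the graph with vertex set $\{v,u_1,\dots,u_n,w_1,\dots,w_n\}$ and edge set $\{vu_i:1\le i\le n\}\cup\{u_iw_i:1\le i\le n\}$, and $D_n^-$ is the graph $D_n-w_n$ obtained by deleting the vertex $w_n$. *)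

theory Defs
  imports Main
begin

type_synonym 'a graph = "'a set \<times> ('a \<Rightarrow> 'a \<Rightarrow> bool)"

definition verts :: "'a graph \<Rightarrow> 'a set" where "verts G = fst G"
definition adj :: "'a graph \<Rightarrow> 'a \<Rightarrow> 'a \<Rightarrow> bool" where "adj G = snd G"

definition simple_graph :: "'a graph \<Rightarrow> bool" where
  "simple_graph G \<longleftrightarrow> finite (verts G) \<and>
     (\<forall>x y. adj G x y \<longrightarrow> x \<in> verts G \<and> y \<in> verts G \<and> x \<noteq> y \<and> adj G y x)"

definition triangle_free :: "'a graph \<Rightarrow> bool" where
  "triangle_free G \<longleftrightarrow> \<not> (\<exists>x y z. adj G x y \<and> adj G y z \<and> adj G x z)"

definition induced :: "'a graph \<Rightarrow> 'a set \<Rightarrow> 'a graph" where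
  "induced G S = (S, \<lambda>x y. x \<in> S \<and> y \<in> S \<and> adj G x y)"

definition complete_bipartite_on :: "'a graph \<Rightarrow> 'a set \<Rightarrow> bool" where
  "complete_bipartite_on G P \<longleftrightarrow> (\<exists>X Y. X \<noteq> {} \<and> Y \<noteq> {} \<and> X \<inter> Y = {} \<and> X \<union> Y = P \<and>
      (\<forall>x\<in>X. \<forall>y\<in>Y. adj G x y) \<and>
      (\<forall>x\<in>X. \<forall>x'\<in>X. \<not> adj G x x') \<and>
      (\<forall>y\<in>Y. \<forall>y'\<in>Y. \<not> adj G y y'))"

definition is_biclique :: "'a graph \<Rightarrow> 'a set \<Rightarrow> bool" where
  "is_biclique G P \<longleftrightarrow> P \<subseteq> verts G \<and> complete_bipartite_on G P \<and>
     (\<forall>Q. P \<subset> Q \<and> Q \<subseteq> verts G \<longrightarrow> \<not> complete_bipartite_on G Q)"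

definition KB :: "'a graph \<Rightarrow> 'a set graph" where
  "KB G = ({P. is_biclique G P},
           \<lambda>P Q. is_biclique G P \<and> is_biclique G Q \<and> P \<noteq> Q \<and> P \<inter> Q \<noteq> {})"

definition square :: "'a graph \<Rightarrow> 'a graph" where
  "square H = (verts H, \<lambda>x y. x \<in> verts H \<and> y \<in> verts H \<and> x \<noteq> y \<and>
      (adj H x y \<or> (\<exists>z \<in> verts H. adj H x z \<and> adj H z y)))"

definition isomorphic :: "'a graph \<Rightarrow> 'b graph \<Rightarrow> bool" where
  "isomorphic G H \<longleftrightarrow> (\<exists>f. bij_betw f (verts G) (verts H) \<and>
      (\<forall>x\<in>verts G. \<forall>y\<in>verts G. adj G x y \<longleftrightarrow> adj H (f x) (f y)))"

definition subgraph :: "'a graph \<Rightarrow> 'a graph \<Rightarrow> bool" where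
  "subgraph H G \<longleftrightarrow> simple_graph H \<and> verts H \<subseteq> verts G \<and> (\<forall>x y. adj H x y \<longrightarrow> adj G x y)"

definition star :: "nat \<Rightarrow> nat graph" where
  "star n = ({0..n}, \<lambda>x y. x \<in> {0..n} \<and> y \<in> {0..n} \<and> ((x = 0 \<and> y \<noteq> 0) \<or> (y = 0 \<and> x \<noteq> 0)))"

text \<open>D_n: v = 0, u_i = i, w_i = n + i (1 \<le> i \<le> n).\<close>
definition D :: "nat \<Rightarrow> nat graph" where
  "D n = ({0..2*n}, \<lambda>x y.
      (x = 0 \<and> 1 \<le> y \<and> y \<le> n) \<or> (y = 0 \<and> 1 \<le> x \<and> x \<le> n) \<or>
      (1 \<le> x \<and> x \<le> n \<and> y = n + x) \<or> (1 \<le> y \<and> y \<le> n \<and> x = n + y))"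

text \<open>D_n^- = D_n - w_n (delete vertex 2n).\<close>
definition D_minus :: "nat \<Rightarrow> nat graph" where
  "D_minus n = induced (D n) (verts (D n) - {2*n})"

end

theory Submission
  imports Defs
begin


definition nbh :: "'a graph \<Rightarrow> 'a \<Rightarrow> 'a set" where "nbh G x = {y. adj G x y}"

definition bip :: "'a graph \<Rightarrow> 'a set \<Rightarrow> 'a set \<Rightarrow> bool" where
  "bip G A B \<longleftrightarrow> A \<noteq> {} \<and> B \<noteq> {} \<and> A \<inter> B = {} \<and> (\<forall>x\<in>A. \<forall>y\<in>B. adj G x y) \<and>
      (\<forall>x\<in>A. \<forall>x'\<in>A. \<not> adj G x x') \<and> (\<forall>y\<in>B. \<forall>y'\<in>B. \<not> adj G y y')"

lemma cb_iff: "complete_bipartite_on G P \<longleftrightarrow> (\<exists>A B. bip G A B \<and> A \<union> B = P)"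
  unfolding complete_bipartite_on_def bip_def by (intro iff_exI) auto

lemma sg_adj: "simple_graph G \<Longrightarrow> adj G x y \<Longrightarrow> x \<in> verts G \<and> y \<in> verts G \<and> x \<noteq> y \<and> adj G y x"
  by (simp add: simple_graph_def)

lemma tf: "triangle_free G \<Longrightarrow> adj G x y \<Longrightarrow> adj G y z \<Longrightarrow> adj G x z \<Longrightarrow> False"
  unfolding triangle_free_def by blast

lemma bip_swap: assumes "simple_graph G" "bip G A B" shows "bip G B A"
proof -
  have sym: "\<And>x y. adj G x y \<Longrightarrow> adj G y x" using sg_adj[OF assms(1)] by blast
  have h: "A \<noteq> {}" "B \<noteq> {}" "A \<inter> B = {}" "\<forall>x\<in>A. \<forall>y\<in>B. adj G x y"
      "\<forall>x\<in>A. \<forall>x'\<in>A. \<not> adj G x x'" "\<forall>y\<in>B. \<forall>y'\<in>B. \<not> adj G y y'"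
    using assms(2) unfolding bip_def by auto
  have "\<forall>x\<in>B. \<forall>y\<in>A. adj G x y" using h(4) sym by simp
  then show ?thesis using h unfolding bip_def by (simp add: Int_commute)
qed

lemma cb_at: assumes "simple_graph G" "complete_bipartite_on G P" "z \<in> P"
  shows "\<exists>A B. z \<in> A \<and> bip G A B \<and> A \<union> B = P"
proof -
  obtain A B where "bip G A B" "A \<union> B = P" using cb_iff[THEN iffD1, OF assms(2)] by blast
  show ?thesis
  proof (cases "z \<in> A")
    case True then show ?thesis using \<open>bip G A B\<close> \<open>A \<union> B = P\<close> by blast
  next
    case False
    then have "z \<in> B" using assms(3) \<open>A \<union> B = P\<close> by blast
    moreover have "bip G B A" "B \<union> A = P" using bip_swap[OF assms(1) \<open>bip G A B\<close>] \<open>A \<union> B = P\<close> by auto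
    ultimately show ?thesis by blast
  qed
qed

lemma biclique_ext: assumes sg: "simple_graph G" and cb: "complete_bipartite_on G Q" and QV: "Q \<subseteq> verts G"
  shows "\<exists>P. is_biclique G P \<and> Q \<subseteq> P"
proof -
  define A where "A = {R. Q \<subseteq> R \<and> R \<subseteq> verts G \<and> complete_bipartite_on G R}"
  have fV: "finite (verts G)" using sg unfolding simple_graph_def by simp
  have "A \<subseteq> Pow (verts G)" unfolding A_def by blast
  then have fin: "finite A" using fV by (simp add: finite_subset)
  have QA: "Q \<in> A" using cb QV unfolding A_def by blast
  obtain m where m: "m \<in> A" "Q \<subseteq> m" "\<forall>b\<in>A. m \<subseteq> b \<longrightarrow> m = b"
    using finite_has_maximal2[OF fin QA] by (elim bexE conjE) (rule that)
  have mV: "m \<subseteq> verts G" and mcb: "complete_bipartite_on G m" using m(1) unfolding A_def by auto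
  have "is_biclique G m" unfolding is_biclique_def
  proof (intro conjI allI impI mV mcb)
    fix Q' assume Q': "m \<subset> Q' \<and> Q' \<subseteq> verts G"
    show "\<not> complete_bipartite_on G Q'"
    proof
      assume "complete_bipartite_on G Q'"
      then have "Q' \<in> A" using Q' m(2) unfolding A_def by blast
      then show False using m(3) Q' by blast
    qed
  qed
  then show ?thesis using m(2) by blast
qed

lemma star_cb: assumes sg: "simple_graph G" and tri: "triangle_free G" and ne: "nbh G x \<noteq> {}"
  shows "complete_bipartite_on G (insert x (nbh G x))"
proof -
  have nx: "x \<notin> nbh G x" using sg_adj[OF sg, of x x] by (auto simp: nbh_def)
  have ind: "\<forall>y\<in>nbh G x. \<forall>y'\<in>nbh G x. \<not> adj G y y'"
    using tf[OF tri, of x] by (auto simp: nbh_def)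
  have irr: "\<not> adj G x x" using sg_adj[OF sg, of x x] by blast
  have "bip G {x} (nbh G x)" unfolding bip_def using ne nx ind irr by (auto simp: nbh_def)
  moreover have "{x} \<union> nbh G x = insert x (nbh G x)" by auto
  ultimately show ?thesis unfolding cb_iff by blast
qed

lemma star_biclique: assumes "simple_graph G" "triangle_free G" "nbh G x \<noteq> {}"
  shows "\<exists>R. is_biclique G R \<and> insert x (nbh G x) \<subseteq> R"
proof -
  obtain y where "adj G x y" using assms(3) by (auto simp: nbh_def)
  then have "insert x (nbh G x) \<subseteq> verts G" using sg_adj[OF assms(1)] by (auto simp: nbh_def)
  then show ?thesis using biclique_ext[OF assms(1) star_cb[OF assms]] by blast
qed

lemma extend_point: assumes sg: "simple_graph G" and tri: "triangle_free G" and P: "is_biclique G P"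
  and ab: "bip G A B" and AB: "A \<union> B = P"
  and yV: "y \<in> verts G" and yP: "y \<notin> P" and yB: "\<forall>b\<in>B. adj G y b"
  shows False
proof -
  have h: "A \<noteq> {}" "B \<noteq> {}" "A \<inter> B = {}" "\<forall>x\<in>A. \<forall>y\<in>B. adj G x y"
      "\<forall>x\<in>A. \<forall>x'\<in>A. \<not> adj G x x'" "\<forall>y\<in>B. \<forall>y'\<in>B. \<not> adj G y y'"
    using ab unfolding bip_def by auto
  obtain b where b: "b \<in> B" using h(2) by blast
  have ya: "\<And>a. a \<in> A \<Longrightarrow> \<not> adj G y a"
  proof
    fix a assume a: "a \<in> A" "adj G y a"
    have "adj G a b" using h(4) a b by blast
    moreover have "adj G y b" using yB b by blast
    ultimately show False using tf[OF tri a(2)] by blast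
  qed
  have ay: "\<And>a. a \<in> A \<Longrightarrow> \<not> adj G a y" using ya sg_adj[OF sg] by blast
  have yy: "\<not> adj G y y" using sg_adj[OF sg, of y y] by blast
  have "bip G (insert y A) B" unfolding bip_def
    using h yB ya ay yy yP AB by auto
  then have "complete_bipartite_on G (insert y P)" unfolding cb_iff using AB by (intro exI[of _ "insert y A"] exI[of _ B]) auto
  moreover have "P \<subset> insert y P" "insert y P \<subseteq> verts G" using P yV yP by (auto simp: is_biclique_def)
  ultimately show False using P unfolding is_biclique_def by blast
qed




lemma bip_nbh: "bip G A B \<Longrightarrow> x \<in> A \<Longrightarrow> B \<subseteq> nbh G x"
  unfolding bip_def nbh_def by auto

lemma nbh_side: "bip G A B \<Longrightarrow> x \<in> A \<Longrightarrow> nbh G x \<subseteq> A \<union> B \<Longrightarrow> nbh G x \<subseteq> B"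
  unfolding bip_def nbh_def by auto

lemma bip_nbh2: "simple_graph G \<Longrightarrow> bip G A B \<Longrightarrow> y \<in> B \<Longrightarrow> A \<subseteq> nbh G y"
  using bip_nbh bip_swap by metis

lemma nbh_side2: "simple_graph G \<Longrightarrow> bip G A B \<Longrightarrow> y \<in> B \<Longrightarrow> nbh G y \<subseteq> A \<union> B \<Longrightarrow> nbh G y \<subseteq> A"
  using nbh_side bip_swap by (metis sup_commute)

lemma distinct_stars:
  assumes sg: "simple_graph G" and tri: "triangle_free G"
    and P: "is_biclique G P" and Q: "is_biclique G Q" and disj: "P \<inter> Q = {}"
    and x: "x \<in> P" and y: "y \<in> Q"
    and R: "complete_bipartite_on G R" and Rx: "insert x (nbh G x) \<subseteq> R" and Ry: "insert y (nbh G y) \<subseteq> R"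
  shows False
proof -
  obtain R1 R2 where r: "x \<in> R1" "bip G R1 R2" "R1 \<union> R2 = R" using cb_at[OF sg R] Rx by blast
  have nx: "nbh G x \<subseteq> R2" using nbh_side[OF r(2) r(1)] Rx r(3) by auto
  obtain A B where ab: "x \<in> A" "bip G A B" "A \<union> B = P" using cb_at[OF sg _ x] P unfolding is_biclique_def by blast
  have Bx: "B \<subseteq> nbh G x" using bip_nbh[OF ab(2,1)] .
  have yV: "y \<in> verts G" using Q y unfolding is_biclique_def by auto
  have yP: "y \<notin> P" using disj y by auto
  show False
  proof (cases "y \<in> R1")
    case True
    then have "\<forall>b\<in>B. adj G y b" using r(2) nx Bx unfolding bip_def by blast
    then show False using extend_point[OF sg tri P ab(2,3) yV yP] by blast
  next
    case False
    then have yR2: "y \<in> R2" using Ry r(3) by auto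
    have ny: "nbh G y \<subseteq> R1" using nbh_side2[OF sg r(2) yR2] Ry r(3) by auto
    obtain A' B' where ab': "y \<in> A'" "bip G A' B'" "A' \<union> B' = Q" using cb_at[OF sg _ y] Q unfolding is_biclique_def by blast
    obtain b' where b': "b' \<in> B'" using ab'(2) unfolding bip_def by blast
    have "b' \<in> R1" using bip_nbh[OF ab'(2,1)] ny b' by auto
    then have "\<forall>b\<in>B. adj G b' b" using r(2) nx Bx unfolding bip_def by blast
    moreover have "b' \<in> verts G" "b' \<notin> P" using Q b' ab'(3) disj unfolding is_biclique_def by auto
    ultimately show False using extend_point[OF sg tri P ab(2,3)] by blast
  qed
qed

lemma pair_meet:
  assumes sg: "simple_graph G" and C: "complete_bipartite_on G C" and z: "z \<in> C" and z': "z' \<in> C"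
    and R: "insert z (nbh G z) \<subseteq> R" and R': "insert z' (nbh G z') \<subseteq> R'"
  shows "R \<inter> R' \<noteq> {}"
proof -
  obtain X Y where xy: "z \<in> X" "bip G X Y" "X \<union> Y = C" using cb_at[OF sg C z] by blast
  show ?thesis
  proof (cases "z' \<in> X")
    case True
    obtain y where "y \<in> Y" using xy(2) unfolding bip_def by blast
    then have "y \<in> nbh G z" "y \<in> nbh G z'" using bip_nbh[OF xy(2)] xy(1) True by auto
    then show ?thesis using R R' by blast
  next
    case False
    then have "z' \<in> nbh G z" using bip_nbh[OF xy(2) xy(1)] xy(3) z' by auto
    then show ?thesis using R R' by blast
  qed
qed

lemma leaf_out:
  assumes sg: "simple_graph G" and C: "is_biclique G C" and L: "is_biclique G L" and ne: "L \<noteq> C"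
    and m: "L \<inter> C \<noteq> {}"
  shows "\<exists>z\<in>C \<inter> L. \<not> nbh G z \<subseteq> C"
proof (rule ccontr)
  assume "\<not> ?thesis"
  then have H: "\<And>w. w \<in> C \<Longrightarrow> w \<in> L \<Longrightarrow> nbh G w \<subseteq> C" by blast
  obtain z where z: "z \<in> C" "z \<in> L" using m by blast
  have Lcb: "complete_bipartite_on G L" and LV: "L \<subseteq> verts G" using L unfolding is_biclique_def by auto
  have Ccb: "complete_bipartite_on G C" and CV: "C \<subseteq> verts G" using C unfolding is_biclique_def by auto
  obtain A B where ab: "z \<in> A" "bip G A B" "A \<union> B = L" using cb_at[OF sg Lcb z(2)] by blast
  have BC: "B \<subseteq> C" using bip_nbh[OF ab(2,1)] H[OF z] by (rule subset_trans)
  obtain b where b: "b \<in> B" using ab(2) unfolding bip_def by blast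
  have bC: "b \<in> C" "b \<in> L" using BC b ab(3) by auto
  have "A \<subseteq> C" using bip_nbh2[OF sg ab(2) b] H[OF bC] by (rule subset_trans)
  then have LC: "L \<subseteq> C" using BC ab(3) by auto
  then have "L \<subset> C" using ne by auto
  then show False using L CV Ccb unfolding is_biclique_def by blast
qed

lemma leaf_edge:
  assumes sg: "simple_graph G" and C: "is_biclique G C" and L: "is_biclique G L"
    and z: "z \<in> C \<inter> L" and h: "nbh G z \<subseteq> C \<or> nbh G z \<subseteq> L"
  shows "\<exists>a\<in>C \<inter> L. \<exists>b\<in>C \<inter> L. adj G a b"
proof -
  have Lcb: "complete_bipartite_on G L" using L unfolding is_biclique_def by auto
  have Ccb: "complete_bipartite_on G C" using C unfolding is_biclique_def by auto
  have zC: "z \<in> C" and zL: "z \<in> L" using z by auto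
  show ?thesis
  proof (cases "nbh G z \<subseteq> C")
    case True
    obtain A B where ab: "z \<in> A" "bip G A B" "A \<union> B = L" using cb_at[OF sg Lcb zL] by blast
    obtain b where b: "b \<in> B" using ab(2) unfolding bip_def by blast
    have zb: "adj G z b" using ab(1,2) b unfolding bip_def by blast
    then have "b \<in> C" using True by (auto simp: nbh_def)
    then show ?thesis using zb zC zL b ab(3) by blast
  next
    case False
    then have hL: "nbh G z \<subseteq> L" using h by blast
    obtain A B where ab: "z \<in> A" "bip G A B" "A \<union> B = C" using cb_at[OF sg Ccb zC] by blast
    obtain b where b: "b \<in> B" using ab(2) unfolding bip_def by blast
    have zb: "adj G z b" using ab(1,2) b unfolding bip_def by blast
    then have "b \<in> L" using hL by (auto simp: nbh_def)
    then show ?thesis using zb zC zL b ab(3) by blast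
  qed
qed

lemma edge_meet:
  assumes sg: "simple_graph G" and C: "complete_bipartite_on G C" and a: "a \<in> C" and b: "b \<in> C"
    and ab: "adj G a b" and z: "z \<in> C"
  shows "a \<in> insert z (nbh G z) \<or> b \<in> insert z (nbh G z)"
proof -
  obtain X Y where xy: "z \<in> X" "bip G X Y" "X \<union> Y = C" using cb_at[OF sg C z] by blast
  have "a \<in> Y \<or> b \<in> Y" using xy ab a b unfolding bip_def by blast
  then show ?thesis using bip_nbh[OF xy(2,1)] by auto
qed




definition imgraph :: "('b \<Rightarrow> 'a) \<Rightarrow> 'b graph \<Rightarrow> 'a graph" where
  "imgraph g K = (g ` verts K, \<lambda>P Q. \<exists>x\<in>verts K. \<exists>y\<in>verts K. P = g x \<and> Q = g y \<and> adj K x y)"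

lemma imgraph_verts: "verts (imgraph g K) = g ` verts K" by (simp add: imgraph_def verts_def)
lemma imgraph_adj: "inj_on g (verts K) \<Longrightarrow> x \<in> verts K \<Longrightarrow> y \<in> verts K \<Longrightarrow>
   adj (imgraph g K) (g x) (g y) \<longleftrightarrow> adj K x y"
  by (auto simp: imgraph_def adj_def verts_def inj_on_def)
lemma imgraph_adjD: "adj (imgraph g K) P Q \<Longrightarrow> \<exists>x\<in>verts K. \<exists>y\<in>verts K. P = g x \<and> Q = g y \<and> adj K x y"
  by (auto simp: imgraph_def adj_def verts_def)

lemma imgraph_iso: assumes "inj_on g (verts K)" shows "isomorphic (imgraph g K) K"
  unfolding isomorphic_def
proof (intro exI conjI ballI)
  show "bij_betw (the_inv_into (verts K) g) (verts (imgraph g K)) (verts K)"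
    unfolding imgraph_verts using assms by (simp add: bij_betw_the_inv_into inj_on_imp_bij_betw)
  fix P Q assume "P \<in> verts (imgraph g K)" "Q \<in> verts (imgraph g K)"
  then obtain x y where "x \<in> verts K" "y \<in> verts K" "P = g x" "Q = g y" unfolding imgraph_verts by auto
  then show "adj (imgraph g K) P Q = adj K (the_inv_into (verts K) g P) (the_inv_into (verts K) g Q)"
    using assms imgraph_adj the_inv_into_f_f by metis
qed

lemma imgraph_sub:
  assumes inj: "inj_on g (verts K)" and fin: "finite (verts K)"
    and symK: "\<forall>x y. adj K x y \<longrightarrow> x \<in> verts K \<and> y \<in> verts K \<and> x \<noteq> y \<and> adj K y x"
    and E: "\<forall>x y. adj K x y \<longrightarrow> adj W (g x) (g y)"
    and V: "\<forall>x\<in>verts K. g x \<in> verts W"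
  shows "subgraph (imgraph g K) W"
proof -
  have key: "adj W P Q \<and> P \<in> verts (imgraph g K) \<and> Q \<in> verts (imgraph g K) \<and> P \<noteq> Q \<and> adj (imgraph g K) Q P"
    if a: "adj (imgraph g K) P Q" for P Q
  proof -
    obtain x y where xy: "x\<in>verts K" "y\<in>verts K" "P = g x" "Q = g y" "adj K x y"
      using imgraph_adjD[OF a] by metis
    have w: "adj W P Q" using xy E by simp
    have s: "x \<noteq> y" "adj K y x" using symK xy(5) by auto
    have "g x \<noteq> g y" using inj xy(1,2) s(1) unfolding inj_on_def by blast
    moreover have "adj (imgraph g K) (g y) (g x)" using imgraph_adj[OF inj xy(2,1)] s(2) by simp
    moreover have "g x \<in> verts (imgraph g K)" "g y \<in> verts (imgraph g K)" using xy(1,2) by (auto simp: imgraph_verts)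
    ultimately show ?thesis using xy(3,4) w by simp
  qed
  have f: "finite (verts (imgraph g K))" using fin by (simp add: imgraph_verts)
  have v: "verts (imgraph g K) \<subseteq> verts W" using V by (auto simp: imgraph_verts)
  show ?thesis unfolding subgraph_def simple_graph_def using key f v by blast
qed

lemma D_verts: "verts (D n) = {0..2*n}" by (simp add: D_def verts_def)
lemma D_adj: "adj (D n) x y \<longleftrightarrow> (x = 0 \<and> 1 \<le> y \<and> y \<le> n) \<or> (y = 0 \<and> 1 \<le> x \<and> x \<le> n) \<or>
      (1 \<le> x \<and> x \<le> n \<and> y = n + x) \<or> (1 \<le> y \<and> y \<le> n \<and> x = n + y)" by (simp add: D_def adj_def)
lemma Dm_verts: "verts (D_minus n) = {0..2*n} - {2*n}" by (simp add: D_minus_def induced_def verts_def D_def)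
lemma Dm_adj: "adj (D_minus n) x y \<longleftrightarrow> x \<in> {0..2*n} - {2*n} \<and> y \<in> {0..2*n} - {2*n} \<and> adj (D n) x y"
  by (auto simp add: D_minus_def induced_def adj_def verts_def D_def)
lemma sq_verts: "verts (square H) = verts H" by (simp add: square_def verts_def)
lemma sq_adj: "adj (square H) x y \<longleftrightarrow> x \<in> verts H \<and> y \<in> verts H \<and> x \<noteq> y \<and>
      (adj H x y \<or> (\<exists>z \<in> verts H. adj H x z \<and> adj H z y))" by (simp add: square_def adj_def verts_def)

lemma twostep: "adj (D n) x z \<Longrightarrow> adj (D n) z y \<Longrightarrow> x \<noteq> y \<Longrightarrow>
   x = 0 \<or> y = 0 \<or> (1\<le>x \<and> x\<le>n \<and> 1\<le>y \<and> y\<le>n)"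
  unfolding D_adj by (elim disjE conjE; simp; linarith)

lemma sqD: assumes "adj (square (D n)) x y" shows "x \<le> 2*n \<and> y \<le> 2*n \<and> x \<noteq> y \<and>
   (x = 0 \<or> y = 0 \<or> (1\<le>x \<and> x\<le>n \<and> 1\<le>y \<and> y\<le>n) \<or> (1\<le>x \<and> x\<le>n \<and> y=n+x) \<or> (1\<le>y \<and> y\<le>n \<and> x=n+y))"
proof -
  have h: "x \<le> 2*n" "y \<le> 2*n" "x \<noteq> y" "adj (D n) x y \<or> (\<exists>z. adj (D n) x z \<and> adj (D n) z y)"
    using assms unfolding sq_adj D_verts by auto
  from h(4) show ?thesis
  proof
    assume "adj (D n) x y" then show ?thesis using h(1-3) unfolding D_adj by blast
  next
    assume "\<exists>z. adj (D n) x z \<and> adj (D n) z y"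
    then obtain z where "adj (D n) x z" "adj (D n) z y" by blast
    then show ?thesis using twostep h(1-3) by blast
  qed
qed

lemma sqDm: assumes "adj (square (D_minus n)) x y" shows "adj (square (D n)) x y \<and> x < 2*n \<and> y < 2*n"
proof -
  have h: "x \<in> {0..2*n} - {2*n}" "y \<in> {0..2*n} - {2*n}" "x \<noteq> y"
    "adj (D_minus n) x y \<or> (\<exists>z\<in>{0..2*n} - {2*n}. adj (D_minus n) x z \<and> adj (D_minus n) z y)"
    using assms unfolding sq_adj Dm_verts by auto
  have "adj (D n) x y \<or> (\<exists>z\<in>{0..2*n}. adj (D n) x z \<and> adj (D n) z y)"
    using h(4) unfolding Dm_adj by blast
  then have "adj (square (D n)) x y" unfolding sq_adj D_verts using h(1-3) by blast
  then show ?thesis using h(1,2) by auto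
qed

lemma D_sym: "adj (D n) x y \<Longrightarrow> adj (D n) y x" unfolding D_adj by blast

lemma sqD_sym: "\<forall>x y. adj (square (D n)) x y \<longrightarrow> x \<in> verts (square (D n)) \<and> y \<in> verts (square (D n)) \<and> x \<noteq> y \<and> adj (square (D n)) y x"
proof (intro allI impI)
  fix x y assume a: "adj (square (D n)) x y"
  then have h: "x \<in> verts (D n)" "y \<in> verts (D n)" "x \<noteq> y" "adj (D n) x y \<or> (\<exists>z\<in>verts (D n). adj (D n) x z \<and> adj (D n) z y)"
    unfolding sq_adj by auto
  have "adj (D n) y x \<or> (\<exists>z\<in>verts (D n). adj (D n) y z \<and> adj (D n) z x)"
    using h(4) D_sym by blast
  then show "x \<in> verts (square (D n)) \<and> y \<in> verts (square (D n)) \<and> x \<noteq> y \<and> adj (square (D n)) y x"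
    unfolding sq_adj sq_verts using h(1-3) by auto
qed

lemma Dm_sym: "adj (D_minus n) x y \<Longrightarrow> adj (D_minus n) y x" unfolding Dm_adj using D_sym by blast

lemma sqDm_sym: "\<forall>x y. adj (square (D_minus n)) x y \<longrightarrow> x \<in> verts (square (D_minus n)) \<and> y \<in> verts (square (D_minus n)) \<and> x \<noteq> y \<and> adj (square (D_minus n)) y x"
proof (intro allI impI)
  fix x y assume a: "adj (square (D_minus n)) x y"
  then have h: "x \<in> verts (D_minus n)" "y \<in> verts (D_minus n)" "x \<noteq> y" "adj (D_minus n) x y \<or> (\<exists>z\<in>verts (D_minus n). adj (D_minus n) x z \<and> adj (D_minus n) z y)"
    unfolding sq_adj by auto
  have "adj (D_minus n) y x \<or> (\<exists>z\<in>verts (D_minus n). adj (D_minus n) y z \<and> adj (D_minus n) z x)"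
    using h(4) Dm_sym by blast
  then show "x \<in> verts (square (D_minus n)) \<and> y \<in> verts (square (D_minus n)) \<and> x \<noteq> y \<and> adj (square (D_minus n)) y x"
    unfolding sq_adj sq_verts using h(1-3) by auto
qed




lemma KB_adj: "adj (KB G) P Q \<longleftrightarrow> is_biclique G P \<and> is_biclique G Q \<and> P \<noteq> Q \<and> P \<inter> Q \<noteq> {}"
  by (simp add: KB_def adj_def)
lemma KB_verts: "verts (KB G) = {P. is_biclique G P}" by (simp add: KB_def verts_def)

definition leaves :: "'a graph \<Rightarrow> 'a set \<Rightarrow> (nat \<Rightarrow> 'a set) \<Rightarrow> nat \<Rightarrow> bool" where
  "leaves G C L n \<longleftrightarrow> is_biclique G C \<and> (\<forall>i\<in>{1..n}. is_biclique G (L i) \<and> L i \<inter> C \<noteq> {} \<and> L i \<noteq> C) \<and>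
     (\<forall>i\<in>{1..n}. \<forall>j\<in>{1..n}. i \<noteq> j \<longrightarrow> L i \<inter> L j = {})"

definition concl :: "'a graph \<Rightarrow> 'a set \<Rightarrow> (nat \<Rightarrow> 'a set) \<Rightarrow> nat \<Rightarrow> bool" where
  "concl G C L n \<longleftrightarrow> (\<exists>H. subgraph H (KB G) \<and> C \<in> verts H \<and>
     (\<forall>i\<in>{1..n}. L i \<in> verts H \<and> adj H C (L i) \<and> adj H (L i) C) \<and>
     (isomorphic H (square (D n)) \<or> isomorphic H (square (D_minus n))))"

lemma bic_cb: "is_biclique G P \<Longrightarrow> complete_bipartite_on G P" by (simp add: is_biclique_def)

lemma caseA:
  assumes sg: "simple_graph G" and tri: "triangle_free G" and lv: "leaves G C L n" and n: "n \<ge> 1"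
    and hA: "\<forall>i\<in>{1..n}. \<exists>z. z \<in> C \<inter> L i \<and> \<not> nbh G z \<subseteq> C \<and> \<not> nbh G z \<subseteq> L i"
  shows "concl G C L n"
proof -
  have Cb: "is_biclique G C" and Lb: "\<And>i. i\<in>{1..n} \<Longrightarrow> is_biclique G (L i)"
    and LC: "\<And>i. i\<in>{1..n} \<Longrightarrow> L i \<inter> C \<noteq> {}" and LnC: "\<And>i. i\<in>{1..n} \<Longrightarrow> L i \<noteq> C"
    and Ld: "\<And>i j. i\<in>{1..n} \<Longrightarrow> j\<in>{1..n} \<Longrightarrow> i \<noteq> j \<Longrightarrow> L i \<inter> L j = {}"
    using lv unfolding leaves_def by auto
  obtain z where z: "\<forall>i\<in>{1..n}. z i \<in> C \<inter> L i \<and> \<not> nbh G (z i) \<subseteq> C \<and> \<not> nbh G (z i) \<subseteq> L i"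
    using bchoice[OF hA] by blast
  have "\<forall>i\<in>{1..n}. \<exists>R. is_biclique G R \<and> insert (z i) (nbh G (z i)) \<subseteq> R"
    using z star_biclique[OF sg tri] by blast
  then obtain M where M: "\<forall>i\<in>{1..n}. is_biclique G (M i) \<and> insert (z i) (nbh G (z i)) \<subseteq> M i"
    using bchoice by metis
  have F1: "\<And>i. i\<in>{1..n} \<Longrightarrow> M i \<noteq> C" using M z by blast
  have F2: "\<And>i j. i\<in>{1..n} \<Longrightarrow> j\<in>{1..n} \<Longrightarrow> M i \<noteq> L j"
  proof -
    fix i j assume ij: "i\<in>{1..n}" "j\<in>{1..n}"
    show "M i \<noteq> L j"
    proof (cases "i = j")
      case True then show ?thesis using M z ij by blast
    next
      case False then show ?thesis using M z ij Ld[OF ij] by blast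
    qed
  qed
  have F3: "\<And>i j. i\<in>{1..n} \<Longrightarrow> j\<in>{1..n} \<Longrightarrow> i \<noteq> j \<Longrightarrow> M i \<noteq> M j"
  proof
    fix i j assume ij: "i\<in>{1..n}" "j\<in>{1..n}" "i \<noteq> j" "M i = M j"
    have zz: "z i \<in> L i" "z j \<in> L j" using z ij by auto
    have Mb: "complete_bipartite_on G (M i)" using M ij bic_cb by blast
    have M1: "insert (z i) (nbh G (z i)) \<subseteq> M i" using M ij(1) by blast
    have M2: "insert (z j) (nbh G (z j)) \<subseteq> M i" using M ij(2) ij(4) by auto
    show False using distinct_stars[OF sg tri Lb[OF ij(1)] Lb[OF ij(2)] Ld[OF ij(1-3)], of "z i" "z j" "M i"]
      using zz Mb M1 M2 by blast
  qed
  have F4: "\<And>i j. i\<in>{1..n} \<Longrightarrow> j\<in>{1..n} \<Longrightarrow> i \<noteq> j \<Longrightarrow> L i \<noteq> L j"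
    using Ld LC by fastforce
  have F5: "\<And>i j. i\<in>{1..n} \<Longrightarrow> j\<in>{1..n} \<Longrightarrow> M i \<inter> M j \<noteq> {}"
    using pair_meet[OF sg bic_cb[OF Cb]] M z by (metis IntD1)
  define g where "g x = (if x = 0 then C else if x \<le> n then M x else L (x - n))" for x
  have zC: "\<And>i. i\<in>{1..n} \<Longrightarrow> z i \<in> C" and zL: "\<And>i. i\<in>{1..n} \<Longrightarrow> z i \<in> L i"
    and zM: "\<And>i. i\<in>{1..n} \<Longrightarrow> z i \<in> M i" using z M by auto
  have gM: "\<And>i. i\<in>{1..n} \<Longrightarrow> g i = M i" and gL: "\<And>i. i\<in>{1..n} \<Longrightarrow> g (n+i) = L i"
    and g0: "g 0 = C" by (auto simp: g_def)
  let ?K = "square (D n)"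
  have VK: "verts ?K = {0..2*n}" by (simp add: sq_verts D_verts)
  have gb: "\<And>x. x \<in> {0..2*n} \<Longrightarrow> is_biclique G (g x)"
  proof -
    fix x assume x: "x \<in> {0..2*n}"
    show "is_biclique G (g x)"
    proof (cases "x = 0")
      case True then show ?thesis using Cb by (simp add: g_def)
    next
      case False
      show ?thesis
      proof (cases "x \<le> n")
        case True then show ?thesis using M False by (simp add: g_def)
      next
        case F2: False
        then have "x - n \<in> {1..n}" using x by auto
        then show ?thesis using Lb False F2 by (simp add: g_def)
      qed
    qed
  qed
  have ord: "g x \<noteq> g y" if xy: "x \<in> {0..2*n}" "y \<in> {0..2*n}" "x < y" for x y
  proof (cases "x = 0")
    case x0: True
    show ?thesis
    proof (cases "y \<le> n")
      case True then have "y \<in> {1..n}" using xy x0 by auto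
      then have "M y \<noteq> C" using F1 by blast
      then show ?thesis using x0 True xy by (simp add: g_def)
    next
      case False then have "y - n \<in> {1..n}" using xy by auto
      then have "L (y - n) \<noteq> C" using LnC by blast
      then show ?thesis using x0 False by (simp add: g_def)
    qed
  next
    case xn0: False
    show ?thesis
    proof (cases "x \<le> n")
      case xle: True
      then have xi: "x \<in> {1..n}" using xn0 by auto
      show ?thesis
      proof (cases "y \<le> n")
        case True then have "y \<in> {1..n}" using xy by auto
        then have "M x \<noteq> M y" using F3[OF xi] xy by auto
        then show ?thesis using xy xle True xn0 by (simp add: g_def)
      next
        case False then have "y - n \<in> {1..n}" using xy by auto
        then have "M x \<noteq> L (y - n)" using F2[OF xi] by blast
        then show ?thesis using xle False xn0 xy by (simp add: g_def)
      qed
    next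
      case False
      then have "x - n \<in> {1..n}" "y - n \<in> {1..n}" "x - n \<noteq> y - n" using xy by auto
      then have "L (x - n) \<noteq> L (y - n)" using F4 by blast
      then show ?thesis using False xn0 xy by (simp add: g_def)
    qed
  qed
  have inj: "inj_on g (verts ?K)" unfolding VK
  proof (rule inj_onI)
    fix x y assume xy: "x \<in> {0..2*n}" "y \<in> {0..2*n}" "g x = g y"
    show "x = y"
    proof (rule ccontr)
      assume "x \<noteq> y"
      then have "x < y \<or> y < x" by linarith
      then show False using ord xy by metis
    qed
  qed
  have edges: "\<forall>x y. adj ?K x y \<longrightarrow> adj (KB G) (g x) (g y)"
  proof (intro allI impI)
    fix x y assume a: "adj ?K x y"
    note s = sqD[OF a]
    have xyV: "x \<in> {0..2*n}" "y \<in> {0..2*n}" "x \<noteq> y" using s by auto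
    have ne: "g x \<noteq> g y" using inj xyV unfolding VK inj_on_def by blast
    have meet: "g x \<inter> g y \<noteq> {}"
    proof -
      have C0: "C \<inter> g w \<noteq> {}" if w: "w \<in> {1..2*n}" for w
      proof (cases "w \<le> n")
        case True then have wi: "w \<in> {1..n}" using w by auto
        then have "z w \<in> C \<inter> g w" using zC zM gM by blast
        then show ?thesis by blast
      next
        case False then have wi: "w - n \<in> {1..n}" and we: "w = n + (w - n)" using w by auto
        have "g w = L (w - n)" using gL[OF wi] we by metis
        then show ?thesis using LC[OF wi] by blast
      qed
      from s consider "x = 0" | "y = 0" | "1\<le>x \<and> x\<le>n \<and> 1\<le>y \<and> y\<le>n" | "1\<le>x \<and> x\<le>n \<and> y=n+x" | "1\<le>y \<and> y\<le>n \<and> x=n+y"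
        by blast
      then show ?thesis
      proof cases
        case 1 then have "y \<in> {1..2*n}" using xyV by auto
        then show ?thesis using C0 1 g0 by blast
      next
        case 2 then have "x \<in> {1..2*n}" using xyV by auto
        then show ?thesis using C0 2 g0 by blast
      next
        case 3 then have "x \<in> {1..n}" "y \<in> {1..n}" by auto
        then show ?thesis using F5 gM by metis
      next
        case 4 then have xi: "x \<in> {1..n}" by auto
        have "z x \<in> g x \<inter> g y" using zM[OF xi] zL[OF xi] gM[OF xi] gL[OF xi] 4 by auto
        then show ?thesis by blast
      next
        case 5 then have yi: "y \<in> {1..n}" by auto
        have "z y \<in> g x \<inter> g y" using zM[OF yi] zL[OF yi] gM[OF yi] gL[OF yi] 5 by auto
        then show ?thesis by blast
      qed
    qed
    have "is_biclique G (g x)" "is_biclique G (g y)" using gb xyV by auto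
    then show "adj (KB G) (g x) (g y)" unfolding KB_adj using ne meet by blast
  qed
  have finK: "finite (verts ?K)" unfolding VK by simp
  have VV: "\<forall>x\<in>verts ?K. g x \<in> verts (KB G)" unfolding VK KB_verts using gb by blast
  have sub: "subgraph (imgraph g ?K) (KB G)" using imgraph_sub[OF inj finK sqD_sym[of n] edges VV] .
  have adjCL: "adj ?K 0 (n+i) \<and> adj ?K (n+i) 0" if i: "i\<in>{1..n}" for i
  proof -
    have d1: "adj (D n) 0 i" "adj (D n) i (n+i)" "adj (D n) (n+i) i" "adj (D n) i 0" using i unfolding D_adj by auto
    have v: "0 \<in> verts (D n)" "n+i \<in> verts (D n)" "i \<in> verts (D n)" "(0::nat) \<noteq> n + i" "n + i \<noteq> 0"
      using i unfolding D_verts by auto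
    show ?thesis unfolding sq_adj using d1 v by blast
  qed
  have Cv: "C \<in> verts (imgraph g ?K)" unfolding imgraph_verts VK using g0 by force
  have Lv: "\<forall>i\<in>{1..n}. L i \<in> verts (imgraph g ?K) \<and> adj (imgraph g ?K) C (L i) \<and> adj (imgraph g ?K) (L i) C"
  proof
    fix i assume i: "i \<in> {1..n}"
    have inV: "n + i \<in> verts ?K" "0 \<in> verts ?K" using i VK by auto
    have "L i \<in> verts (imgraph g ?K)" unfolding imgraph_verts using inV(1) gL[OF i] by (metis imageI)
    moreover have "adj (imgraph g ?K) (g 0) (g (n+i))" using imgraph_adj[OF inj inV(2,1)] adjCL[OF i] by blast
    moreover have "adj (imgraph g ?K) (g (n+i)) (g 0)" using imgraph_adj[OF inj inV(1,2)] adjCL[OF i] by blast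
    ultimately show "L i \<in> verts (imgraph g ?K) \<and> adj (imgraph g ?K) C (L i) \<and> adj (imgraph g ?K) (L i) C"
      using g0 gL[OF i] by simp
  qed
  have iso: "isomorphic (imgraph g ?K) (square (D n))" using imgraph_iso[OF inj] .
  show ?thesis unfolding concl_def using sub Cv Lv iso by blast
qed




lemma caseB:
  assumes sg: "simple_graph G" and tri: "triangle_free G" and lv: "leaves G C L n" and n: "n \<ge> 1"
    and a: "a \<in> C \<inter> L n" and b: "b \<in> C \<inter> L n" and ab: "adj G a b"
  shows "concl G C L n"
proof -
  have Cb: "is_biclique G C" and Lb: "\<And>i. i\<in>{1..n} \<Longrightarrow> is_biclique G (L i)"
    and LC: "\<And>i. i\<in>{1..n} \<Longrightarrow> L i \<inter> C \<noteq> {}" and LnC: "\<And>i. i\<in>{1..n} \<Longrightarrow> L i \<noteq> C"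
    and Ld: "\<And>i j. i\<in>{1..n} \<Longrightarrow> j\<in>{1..n} \<Longrightarrow> i \<noteq> j \<Longrightarrow> L i \<inter> L j = {}"
    using lv unfolding leaves_def by auto
  have hA: "\<forall>i\<in>{1..<n}. \<exists>z. z \<in> C \<inter> L i \<and> \<not> nbh G z \<subseteq> C"
    using leaf_out[OF sg Cb Lb LnC LC] by fastforce
  obtain z where z: "\<forall>i\<in>{1..<n}. z i \<in> C \<inter> L i \<and> \<not> nbh G (z i) \<subseteq> C"
    using bchoice[OF hA] by blast
  have "\<forall>i\<in>{1..<n}. \<exists>R. is_biclique G R \<and> insert (z i) (nbh G (z i)) \<subseteq> R"
    using z star_biclique[OF sg tri] by blast
  then obtain M where M: "\<forall>i\<in>{1..<n}. is_biclique G (M i) \<and> insert (z i) (nbh G (z i)) \<subseteq> M i"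
    using bchoice by metis
  have F1: "\<And>i. i\<in>{1..<n} \<Longrightarrow> M i \<noteq> C" using M z by blast
  have F0: "\<And>i. i\<in>{1..<n} \<Longrightarrow> M i \<inter> L n \<noteq> {}"
  proof -
    fix i assume i: "i\<in>{1..<n}"
    have "a \<in> insert (z i) (nbh G (z i)) \<or> b \<in> insert (z i) (nbh G (z i))"
      using edge_meet[OF sg bic_cb[OF Cb] _ _ ab, of "z i"] a b z i by blast
    then show "M i \<inter> L n \<noteq> {}" using M i a b by blast
  qed
  have F2: "\<And>i j. i\<in>{1..<n} \<Longrightarrow> j\<in>{1..n} \<Longrightarrow> M i \<noteq> L j"
  proof -
    fix i j assume ij: "i\<in>{1..<n}" "j\<in>{1..n}"
    have i': "i \<in> {1..n}" "n \<in> {1..n}" "i \<noteq> n" using ij n by auto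
    show "M i \<noteq> L j"
    proof (cases "i = j")
      case True then show ?thesis using F0[OF ij(1)] Ld[OF i'] by blast
    next
      case False
      have "z i \<in> M i" "z i \<in> L i" using M z ij(1) by auto
      moreover have "L i \<inter> L j = {}" using Ld[OF i'(1) ij(2) False] .
      ultimately show ?thesis by blast
    qed
  qed
  have F3: "\<And>i j. i\<in>{1..<n} \<Longrightarrow> j\<in>{1..<n} \<Longrightarrow> i \<noteq> j \<Longrightarrow> M i \<noteq> M j"
  proof
    fix i j assume ij: "i\<in>{1..<n}" "j\<in>{1..<n}" "i \<noteq> j" "M i = M j"
    have ij': "i \<in> {1..n}" "j \<in> {1..n}" using ij by auto
    have zz: "z i \<in> L i" "z j \<in> L j" using z ij by auto
    have Mb: "complete_bipartite_on G (M i)" using M ij bic_cb by blast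
    have M1: "insert (z i) (nbh G (z i)) \<subseteq> M i" using M ij(1) by blast
    have M2: "insert (z j) (nbh G (z j)) \<subseteq> M i" using M ij(2) ij(4) by auto
    show False using distinct_stars[OF sg tri Lb[OF ij'(1)] Lb[OF ij'(2)] Ld[OF ij' ij(3)], of "z i" "z j" "M i"]
      using zz Mb M1 M2 by blast
  qed
  have F4: "\<And>i j. i\<in>{1..n} \<Longrightarrow> j\<in>{1..n} \<Longrightarrow> i \<noteq> j \<Longrightarrow> L i \<noteq> L j"
    using Ld LC by fastforce
  have F5: "\<And>i j. i\<in>{1..<n} \<Longrightarrow> j\<in>{1..<n} \<Longrightarrow> M i \<inter> M j \<noteq> {}"
    using pair_meet[OF sg bic_cb[OF Cb]] M z by (metis IntD1)
  define g where "g x = (if x = 0 then C else if x < n then M x else if x = n then L n else L (x - n))" for x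
  let ?K = "square (D_minus n)"
  have VK: "verts ?K = {0..<2*n}" by (auto simp: sq_verts Dm_verts)
  have nn: "n \<in> {1..n}" using n by auto
  have zC: "\<And>i. i\<in>{1..<n} \<Longrightarrow> z i \<in> C" and zL: "\<And>i. i\<in>{1..<n} \<Longrightarrow> z i \<in> L i"
    and zM: "\<And>i. i\<in>{1..<n} \<Longrightarrow> z i \<in> M i" using z M by auto
  have gM: "\<And>i. i\<in>{1..<n} \<Longrightarrow> g i = M i" and gL: "\<And>i. i\<in>{1..<n} \<Longrightarrow> g (n+i) = L i"
    and g0: "g 0 = C" and gn: "g n = L n" using n by (auto simp: g_def)
  have i1n: "\<And>i. i\<in>{1..<n} \<Longrightarrow> i \<in> {1..n}" by auto
  have gb: "is_biclique G (g x)" if x: "x \<in> {0..<2*n}" for x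
  proof -
    consider "x = 0" | "x \<in> {1..<n}" | "x = n" | "x - n \<in> {1..<n}" "x = n + (x - n)" using x by fastforce
    then show ?thesis
    proof cases
      case 1 then show ?thesis using Cb g0 by simp
    next
      case 2 then show ?thesis using M gM by auto
    next
      case 3 then show ?thesis using Lb[OF nn] gn by simp
    next
      case 4 then show ?thesis using Lb[OF i1n[OF 4(1)]] gL[OF 4(1)] by metis
    qed
  qed
  have ord: "g x \<noteq> g y" if xy: "x \<in> {0..<2*n}" "y \<in> {0..<2*n}" "x < y" for x y
  proof -
    consider "y \<in> {1..<n}" | "y = n" | "y - n \<in> {1..<n}" "y = n + (y - n)" using xy by fastforce
    note cy = this
    consider "x = 0" | "x \<in> {1..<n}" | "x = n" | "x - n \<in> {1..<n}" "x = n + (x - n)" using xy by fastforce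
    then show ?thesis
    proof cases
      case 1
      from cy show ?thesis
      proof cases
        case 1 then show ?thesis using F1 gM g0 \<open>x = 0\<close> by metis
      next
        case 2 then show ?thesis using LnC[OF nn] gn g0 \<open>x = 0\<close> by metis
      next
        case 3 then show ?thesis using LnC[OF i1n[OF 3(1)]] gL[OF 3(1)] g0 \<open>x = 0\<close> by metis
      qed
    next
      case xc: 2
      from cy show ?thesis
      proof cases
        case 1 then show ?thesis using F3[OF xc 1] xy(3) gM[OF xc] gM[OF 1] by auto
      next
        case 2 then show ?thesis using F2[OF xc nn] gM[OF xc] gn by simp
      next
        case 3 then show ?thesis using F2[OF xc i1n[OF 3(1)]] gM[OF xc] gL[OF 3(1)] by metis
      qed
    next
      case xc: 3
      from cy show ?thesis
      proof cases
        case 1 then show ?thesis using xy xc by simp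
      next
        case 2 then show ?thesis using xy xc by simp
      next
        case 3
        have "y - n \<noteq> n" using xy by auto
        then show ?thesis using F4[OF i1n[OF 3(1)] nn] gn gL[OF 3(1)] xc 3(2) by metis
      qed
    next
      case xc: 4
      from cy show ?thesis
      proof cases
        case 1 then show ?thesis using xy xc by simp
      next
        case 2 then show ?thesis using xy xc by simp
      next
        case 3
        have "x - n \<noteq> y - n" using xy xc 3 by auto
        then show ?thesis using F4[OF i1n[OF xc(1)] i1n[OF 3(1)]] gL[OF 3(1)] gL[OF xc(1)] xc 3 by metis
      qed
    qed
  qed
  have inj: "inj_on g (verts ?K)" unfolding VK
  proof (rule inj_onI)
    fix x y assume xy: "x \<in> {0..<2*n}" "y \<in> {0..<2*n}" "g x = g y"
    show "x = y"
    proof (rule ccontr)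
      assume "x \<noteq> y"
      then have "x < y \<or> y < x" by linarith
      then show False using ord xy by metis
    qed
  qed
  have C0: "C \<inter> g w \<noteq> {}" if w: "w \<in> {1..<2*n}" for w
  proof -
    consider "w \<in> {1..<n}" | "w = n" | "w - n \<in> {1..<n}" "w = n + (w - n)" using w by fastforce
    then show ?thesis
    proof cases
      case 1 then have "z w \<in> C \<inter> g w" using zC zM gM by blast
      then show ?thesis by blast
    next
      case 2 then show ?thesis using LC[OF nn] gn by blast
    next
      case 3 then have "g w = L (w - n)" using gL by metis
      then show ?thesis using LC[OF i1n[OF 3(1)]] by blast
    qed
  qed
  have U: "g u \<inter> g v \<noteq> {}" if uv: "u \<in> {1..n}" "v \<in> {1..n}" "u \<noteq> v" for u v
  proof -
    consider "u \<in> {1..<n}" "v \<in> {1..<n}" | "u = n" "v \<in> {1..<n}" | "u \<in> {1..<n}" "v = n" using uv by fastforce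
    then show ?thesis
    proof cases
      case 1 then show ?thesis using F5 gM by metis
    next
      case 2 then show ?thesis using F0[OF 2(2)] gM[OF 2(2)] gn by blast
    next
      case 3 then show ?thesis using F0[OF 3(1)] gM[OF 3(1)] gn by blast
    qed
  qed
  have edges: "\<forall>x y. adj ?K x y \<longrightarrow> adj (KB G) (g x) (g y)"
  proof (intro allI impI)
    fix x y assume a: "adj ?K x y"
    note s0 = sqDm[OF a]
    note s = sqD[OF conjunct1[OF s0]]
    have xyV: "x \<in> {0..<2*n}" "y \<in> {0..<2*n}" "x \<noteq> y" using s s0 by auto
    have ne: "g x \<noteq> g y" using inj xyV unfolding VK inj_on_def by blast
    have meet: "g x \<inter> g y \<noteq> {}"
    proof -
      from s consider "x = 0" | "y = 0" | "1\<le>x \<and> x\<le>n \<and> 1\<le>y \<and> y\<le>n" | "1\<le>x \<and> x\<le>n \<and> y=n+x" | "1\<le>y \<and> y\<le>n \<and> x=n+y"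
        by blast
      then show ?thesis
      proof cases
        case 1 then have "y \<in> {1..<2*n}" using xyV by auto
        then show ?thesis using C0 1 g0 by blast
      next
        case 2 then have "x \<in> {1..<2*n}" using xyV by auto
        then show ?thesis using C0 2 g0 by blast
      next
        case 3 then have "x \<in> {1..n}" "y \<in> {1..n}" by auto
        then show ?thesis using U xyV by blast
      next
        case 4 then have xi: "x \<in> {1..<n}" using xyV by auto
        have "z x \<in> g x \<inter> g y" using zM[OF xi] zL[OF xi] gM[OF xi] gL[OF xi] 4 by auto
        then show ?thesis by blast
      next
        case 5 then have yi: "y \<in> {1..<n}" using xyV by auto
        have "z y \<in> g x \<inter> g y" using zM[OF yi] zL[OF yi] gM[OF yi] gL[OF yi] 5 by auto
        then show ?thesis by blast
      qed
    qed
    have "is_biclique G (g x)" "is_biclique G (g y)" using gb xyV by auto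
    then show "adj (KB G) (g x) (g y)" unfolding KB_adj using ne meet by blast
  qed
  have finK: "finite (verts ?K)" unfolding VK by simp
  have VV: "\<forall>x\<in>verts ?K. g x \<in> verts (KB G)" unfolding VK KB_verts using gb by blast
  have sub: "subgraph (imgraph g ?K) (KB G)" using imgraph_sub[OF inj finK sqDm_sym[of n] edges VV] .
  define idx where "idx i = (if i = n then n else n + i)" for i
  have adjCL: "adj ?K 0 (idx i) \<and> adj ?K (idx i) 0 \<and> idx i \<in> verts ?K \<and> g (idx i) = L i" if i: "i\<in>{1..n}" for i
  proof (cases "i = n")
    case True
    have d1: "adj (D_minus n) 0 n" "adj (D_minus n) n 0" using n unfolding Dm_adj D_adj by auto
    have v: "0 \<in> verts (D_minus n)" "n \<in> verts (D_minus n)" "(0::nat) \<noteq> n" "n \<noteq> 0"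
      using n unfolding Dm_verts by auto
    show ?thesis unfolding sq_adj sq_verts idx_def using d1 v True gn by auto
  next
    case False
    then have ii: "i \<in> {1..<n}" using i by auto
    have d1: "adj (D_minus n) 0 i" "adj (D_minus n) i (n+i)" "adj (D_minus n) (n+i) i" "adj (D_minus n) i 0"
      using ii unfolding Dm_adj D_adj by auto
    have v: "0 \<in> verts (D_minus n)" "n+i \<in> verts (D_minus n)" "i \<in> verts (D_minus n)" "(0::nat) \<noteq> n + i" "n + i \<noteq> 0"
      using ii unfolding Dm_verts by auto
    have "adj ?K 0 (n+i) \<and> adj ?K (n+i) 0" unfolding sq_adj using d1 v by blast
    then show ?thesis using False v(2) gL[OF ii] unfolding idx_def sq_verts by simp
  qed
  have zero: "0 \<in> verts ?K" using n VK by auto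
  have Cv: "C \<in> verts (imgraph g ?K)" unfolding imgraph_verts using zero g0 by force
  have Lv: "\<forall>i\<in>{1..n}. L i \<in> verts (imgraph g ?K) \<and> adj (imgraph g ?K) C (L i) \<and> adj (imgraph g ?K) (L i) C"
  proof
    fix i assume i: "i \<in> {1..n}"
    note h = adjCL[OF i]
    have "L i \<in> verts (imgraph g ?K)" unfolding imgraph_verts using h by (metis imageI)
    moreover have "adj (imgraph g ?K) (g 0) (g (idx i))" using imgraph_adj[OF inj zero] h by blast
    moreover have "adj (imgraph g ?K) (g (idx i)) (g 0)" using imgraph_adj[OF inj _ zero] h by blast
    ultimately show "L i \<in> verts (imgraph g ?K) \<and> adj (imgraph g ?K) C (L i) \<and> adj (imgraph g ?K) (L i) C"
      using g0 h by simp
  qed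
  have iso: "isomorphic (imgraph g ?K) (square (D_minus n))" using imgraph_iso[OF inj] .
  show ?thesis unfolding concl_def using sub Cv Lv iso by blast
qed




lemma concl_all:
  assumes sg: "simple_graph G" and tri: "triangle_free G" and lv: "leaves G C L n" and n: "n \<ge> 1"
  shows "concl G C L n"
proof (cases "\<forall>i\<in>{1..n}. \<exists>z. z \<in> C \<inter> L i \<and> \<not> nbh G z \<subseteq> C \<and> \<not> nbh G z \<subseteq> L i")
  case True then show ?thesis using caseA[OF sg tri lv n] by blast
next
  case False
  then obtain k where k: "k \<in> {1..n}" "\<forall>z\<in>C \<inter> L k. nbh G z \<subseteq> C \<or> nbh G z \<subseteq> L k" by blast
  have Cb: "is_biclique G C" and Lb: "\<And>i. i\<in>{1..n} \<Longrightarrow> is_biclique G (L i)"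
    and LC: "\<And>i. i\<in>{1..n} \<Longrightarrow> L i \<inter> C \<noteq> {}"
    using lv unfolding leaves_def by auto
  obtain z where "z \<in> C \<inter> L k" using LC[OF k(1)] by blast
  then obtain a b where ab: "a \<in> C \<inter> L k" "b \<in> C \<inter> L k" "adj G a b"
    using leaf_edge[OF sg Cb Lb[OF k(1)]] k(2) by blast
  define p where "p i = (if i = k then n else if i = n then k else i)" for i
  have pp: "\<And>i. p (p i) = i" by (simp add: p_def)
  have pr: "\<And>i. i \<in> {1..n} \<Longrightarrow> p i \<in> {1..n}" using k n by (auto simp: p_def)
  have pinj: "\<And>i j. p i = p j \<Longrightarrow> i = j" using pp by metis
  define L' where "L' i = L (p i)" for i
  have lv': "leaves G C L' n" using lv pr pinj unfolding leaves_def L'_def by metis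
  have "p n = k" by (simp add: p_def)
  then have "concl G C L' n" using caseB[OF sg tri lv' n, of a b] ab by (simp add: L'_def)
  then show ?thesis unfolding concl_def L'_def using pr pp by metis
qed

theorem corollary4:
  fixes G :: "'a graph" and n :: nat and S :: "'a set set"
  assumes "simple_graph G"
    and "triangle_free G"
    and "n \<ge> 1"
    and "S \<subseteq> verts (KB G)"
    and "isomorphic (induced (KB G) S) (star n)"
  shows "\<exists>H. subgraph H (KB G) \<and>
             verts (induced (KB G) S) \<subseteq> verts H \<and>
             (\<forall>x y. adj (induced (KB G) S) x y \<longrightarrow> adj H x y) \<and>
             (isomorphic H (square (D n)) \<or> isomorphic H (square (D_minus n)))"
proof -
  have vI: "verts (induced (KB G) S) = S" by (simp add: induced_def verts_def)
  have aI: "\<And>x y. adj (induced (KB G) S) x y \<longleftrightarrow> x \<in> S \<and> y \<in> S \<and> adj (KB G) x y"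
    by (simp add: induced_def adj_def)
  have vS: "verts (star n) = {0..n}" by (simp add: star_def verts_def)
  have aS: "\<And>x y. adj (star n) x y \<longleftrightarrow> x \<in> {0..n} \<and> y \<in> {0..n} \<and> ((x = 0 \<and> y \<noteq> 0) \<or> (y = 0 \<and> x \<noteq> 0))"
    by (simp add: star_def adj_def)
  obtain f where f: "bij_betw f S {0..n}" "\<forall>x\<in>S. \<forall>y\<in>S. adj (induced (KB G) S) x y \<longleftrightarrow> adj (star n) (f x) (f y)"
    using assms(5) unfolding isomorphic_def vI vS by blast
  define h where "h = inv_into S f"
  have hS: "\<And>i. i \<in> {0..n} \<Longrightarrow> h i \<in> S" and fh: "\<And>i. i \<in> {0..n} \<Longrightarrow> f (h i) = i"
    and hf: "\<And>P. P \<in> S \<Longrightarrow> h (f P) = P" and fS: "\<And>P. P \<in> S \<Longrightarrow> f P \<in> {0..n}"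
    using f(1) unfolding h_def
    by (auto simp: bij_betw_def inv_into_into f_inv_into_f inv_into_f_f)
  have bS: "\<And>P. P \<in> S \<Longrightarrow> is_biclique G P" using assms(4) by (auto simp: KB_verts)
  have adjh: "\<And>i j. i \<in> {0..n} \<Longrightarrow> j \<in> {0..n} \<Longrightarrow> adj (KB G) (h i) (h j) \<longleftrightarrow> adj (star n) i j"
    using f(2) hS fh aI by metis
  have lv: "leaves G (h 0) h n" unfolding leaves_def
  proof (intro conjI ballI impI)
    show "is_biclique G (h 0)" using bS hS by auto
    fix i assume i: "i \<in> {1..n}"
    have "adj (KB G) (h i) (h 0)" using adjh[of i 0] i by (auto simp: aS)
    then show "is_biclique G (h i)" "h i \<inter> h 0 \<noteq> {}" "h i \<noteq> h 0" by (auto simp: KB_adj)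
    fix j assume j: "j \<in> {1..n}" "i \<noteq> j"
    have "\<not> adj (KB G) (h i) (h j)" using adjh[of i j] i j by (auto simp: aS)
    moreover have "h i \<noteq> h j" using fh i j by (metis atLeastAtMost_iff le0)
    ultimately show "h i \<inter> h j = {}" using bS hS i j by (auto simp: KB_adj)
  qed
  obtain H where H: "subgraph H (KB G)" "h 0 \<in> verts H"
    "\<forall>i\<in>{1..n}. h i \<in> verts H \<and> adj H (h 0) (h i) \<and> adj H (h i) (h 0)"
    "isomorphic H (square (D n)) \<or> isomorphic H (square (D_minus n))"
    using concl_all[OF assms(1,2) lv assms(3)] unfolding concl_def by blast
  show ?thesis
  proof (intro exI conjI allI impI)
    show "subgraph H (KB G)" by (rule H(1))
    show "isomorphic H (square (D n)) \<or> isomorphic H (square (D_minus n))" by (rule H(4))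
    show "verts (induced (KB G) S) \<subseteq> verts H"
    proof
      fix P assume "P \<in> verts (induced (KB G) S)"
      then have P: "P \<in> S" by (simp add: vI)
      show "P \<in> verts H"
      proof (cases "f P = 0")
        case True then show ?thesis using H(2) hf[OF P] by metis
      next
        case False then have "f P \<in> {1..n}" using fS[OF P] by auto
        then show ?thesis using H(3) hf[OF P] by metis
      qed
    qed
    fix P Q assume a: "adj (induced (KB G) S) P Q"
    then have PQ: "P \<in> S" "Q \<in> S" using aI by auto
    then have "adj (star n) (f P) (f Q)" using f(2) a by blast
    then have "(f P = 0 \<and> f Q \<in> {1..n}) \<or> (f Q = 0 \<and> f P \<in> {1..n})" using aS by auto
    then show "adj H P Q" using H(3) hf[OF PQ(1)] hf[OF PQ(2)] by metis
  qed
qed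


end
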